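(* Let $q>0$. For $t>1$, $z\in(-1,1)$ put $K(t,z)=\frac{t^2+2tz+1}{(z+t)^2}$ and $\tilde J(-q,q,t,z)=(z+t)^2\big[K(t,z)^{2/q}-1\big]$. Then for every $t>1$ and $z\in(-1,1)$: $\frac{\partial\tilde J}{\partial t}(-q,q,t,z)<0$ if $0<q<2$, and $\frac{\partial\tilde J}{\partial t}(-q,q,t,z)>0$ if $q>2$. Moreover, for every $r>1$: $\frac{\partial\Theta}{\partial r}(-q,q,r)<0$ if $0<q<2$, and $\frac{\partial\Theta}{\partial r}(-q,q,r)>0$ if $q>2$.
   Context: For $p<q$, $p,q\ne0$, $r>1$, $\Theta(p,q,r)=\int_1^r\Big(\big(\frac{r^p-r^q}{r^p-1}+\frac{r^q-1}{r^p-1}x^p\big)^{2/q}-x^2\Big)^{-1/2}dx$. With $\beta_0=\frac{2q-p}{3}$ and $t=\frac{r^{\beta_0}+1}{r^{\beta_0}-1}$, one has $\Theta(p,q,r)=\int_{-1}^1\frac{dz}{\beta_0\sqrt{\tilde J(p,q,t,z)}}$ (for $p=-q$, $\beta_0=q$). *)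

theory Defs
  imports "HOL-Analysis.Analysis"
begin

definition Kfun :: "real \<Rightarrow> real \<Rightarrow> real" where
  "Kfun t z = (t^2 + 2*t*z + 1) / (z + t)^2"

definition Jtilde_sym :: "real \<Rightarrow> real \<Rightarrow> real \<Rightarrow> real" where
  "Jtilde_sym q t z = (z + t)^2 * (Kfun t z powr (2/q) - 1)"

text \<open>Theta(p,q,r) as an integral over [1,r] (improper at the endpoints;
  the integrand is nonnegative, so the Henstock-Kurzweil integral agrees with
  the Lebesgue / improper Riemann integral).\<close>
definition Theta :: "real \<Rightarrow> real \<Rightarrow> real \<Rightarrow> real" where
  "Theta p q r = integral {1..r} (\<lambda>x.
     (((r powr p - r powr q) / (r powr p - 1) + (r powr q - 1) / (r powr p - 1) * x powr p)
        powr (2/q) - x^2) powr (-1/2))"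

end

theory Submission
  imports Defs
begin

definition phi :: "real \<Rightarrow> real \<Rightarrow> real" where
  "phi a k = (1-a) * k powr a + a * k powr (a-1) - 1"

lemma phi_deriv:
  assumes "k > 0"
  shows "((phi a) has_real_derivative (a*(1-a) * k powr (a-2) * (k-1))) (at k)"
proof -
  have "((phi a) has_real_derivative ((1-a) * (a * k powr (a-1)) + a * ((a-1) * k powr (a-1-1)))) (at k)"
    unfolding phi_def using assms
    by (auto intro!: derivative_eq_intros)
  moreover have "(1-a) * (a * k powr (a-1)) + a * ((a-1) * k powr (a-1-1)) = a*(1-a) * k powr (a-2) * (k-1)"
  proof -
    have "k powr (a-1) = k powr (a-2) * k"
      using powr_add[of k "a-2" 1] assms by simp
    then show ?thesis by (simp add: algebra_simps)
  qed
  ultimately show ?thesis by simp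
qed

lemma phi_sign:
  assumes "a > 0" "k > 1"
  shows "(a > 1 \<longrightarrow> phi a k < 0) \<and> (a < 1 \<longrightarrow> phi a k > 0)"
proof -
  have p1: "phi a 1 = 0" by (simp add: phi_def)
  obtain z where z: "1 < z" "z < k" "phi a k - phi a 1 = (k - 1) * (a*(1-a) * z powr (a-2) * (z-1))"
    using MVT2[OF assms(2), of "phi a" "\<lambda>k. a*(1-a) * k powr (a-2) * (k-1)"] phi_deriv by force
  have pos: "z powr (a-2) > 0" "z - 1 > 0" "k - 1 > 0" using z by auto
  show ?thesis
  proof (intro conjI impI)
    assume "a > 1"
    then have "a*(1-a) < 0" using assms by (simp add: mult_pos_neg)
    then have "(k - 1) * (a*(1-a) * z powr (a-2) * (z-1)) < 0"
      using pos by (simp add: mult_pos_neg mult_neg_pos)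
    then show "phi a k < 0" using z p1 by simp
  next
    assume "a < 1"
    then have "a*(1-a) > 0" using assms by simp
    then have "(k - 1) * (a*(1-a) * z powr (a-2) * (z-1)) > 0"
      using pos by simp
    then show "phi a k > 0" using z p1 by simp
  qed
qed

definition gfun :: "real \<Rightarrow> real \<Rightarrow> real" where
  "gfun a y = (if y = 0 then a else ((1+y) powr a - 1)/y)"

definition mfun :: "real \<Rightarrow> real \<Rightarrow> real" where
  "mfun a y = a * (1+y) powr (a-1) - gfun a y"

lemma gfun_cont:
  assumes "y > -1"
  shows "isCont (gfun a) y"
proof (cases "y = 0")
  case True
  have d: "((\<lambda>y. (1+y) powr a) has_real_derivative a) (at 0)"
    by (auto intro!: derivative_eq_intros)
  have "((\<lambda>x. ((1+x) powr a - (1+0) powr a) / (x - 0)) \<longlongrightarrow> a) (at 0)"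
    using d by (simp add: has_field_derivative_iff)
  then have "((\<lambda>x. ((1+x) powr a - 1) / x) \<longlongrightarrow> a) (at 0)" by simp
  then have "(gfun a \<longlongrightarrow> a) (at 0)"
  proof (rule tendsto_cong[THEN iffD1, rotated])
    show "\<forall>\<^sub>F x in at 0. ((1+x) powr a - 1) / x = gfun a x"
      by (auto simp: gfun_def eventually_at_filter)
  qed
  then show ?thesis using True by (simp add: isCont_def gfun_def)
next
  case False
  have "isCont (\<lambda>y. ((1+y) powr a - 1)/y) y" using False assms
    by (auto intro!: continuous_intros)
  moreover have ev: "eventually (\<lambda>x. gfun a x = ((1+x) powr a - 1)/x) (nhds y)"
    using t1_space_nhds[OF False] by eventually_elim (simp add: gfun_def)
  ultimately show ?thesis using isCont_cong[OF ev] by simp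
qed

lemma gfun_cont_on: "continuous_on {0..} (gfun a)"
  by (intro continuous_at_imp_continuous_on ballI gfun_cont) auto

lemma mfun_cont_on: "continuous_on {0..} (mfun a)"
  unfolding mfun_def
  by (intro continuous_intros gfun_cont_on) auto

lemma gfun_pos: "a > 0 \<Longrightarrow> y \<ge> 0 \<Longrightarrow> gfun a y > 0"
  by (auto simp: gfun_def)

lemma mfun_0: "mfun a 0 = 0" by (simp add: mfun_def gfun_def)

lemma gfun_deriv:
  assumes "y > 0"
  shows "((gfun a) has_real_derivative (mfun a y / y)) (at y)"
proof -
  have "((\<lambda>y. ((1+y) powr a - 1)/y) has_real_derivative
     ((a * (1+y) powr (a-1)) * y - ((1+y) powr a - 1) * 1) / (y*y)) (at y)"
    using assms by (auto intro!: derivative_eq_intros)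
  moreover have "((a * (1+y) powr (a-1)) * y - ((1+y) powr a - 1) * 1) / (y*y) = mfun a y / y"
    using assms by (simp add: mfun_def gfun_def field_simps)
  ultimately have "((\<lambda>y. ((1+y) powr a - 1)/y) has_real_derivative mfun a y / y) (at y)" by simp
  then show ?thesis
    by (rule has_field_derivative_transform_within_open[where S="{0<..}"]) (use assms in \<open>auto simp: gfun_def\<close>)
qed

lemma mfun_phi:
  assumes "y > 0"
  shows "mfun a y = - phi a (1+y) / y"
proof -
  have "(1+y) powr a = (1+y) powr (a-1) * (1+y)"
    using powr_add[of "1+y" "a-1" 1] assms by simp
  then show ?thesis using assms unfolding mfun_def gfun_def phi_def
    by (simp add: field_simps)
qed

lemma J_deriv:
  assumes "t > 1" "-1 < z" "z < 1" "q > 0"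
  shows "((\<lambda>s. Jtilde_sym q s z) has_real_derivative 2*(z+t)*phi (2/q) (Kfun t z)) (at t)"
proof -
  define a where "a = 2/q"
  have S: "z + t > 0" using assms by simp
  have P: "t^2 + 2*t*z + 1 > 0"
  proof -
    have "t^2 + 2*t*z + 1 = (z+t)^2 + (1 - z^2)" by (simp add: power2_eq_square algebra_simps)
    moreover have "1 - z^2 > 0" using assms by (simp add: abs_square_less_1)
    ultimately show ?thesis using S by (metis add_pos_pos zero_less_power)
  qed
  have K: "Kfun t z > 0" unfolding Kfun_def using S P by simp
  have eqf: "(\<lambda>s. Jtilde_sym q s z) = (\<lambda>u. (z+u)^2 * (((u^2 + 2*u*z + 1) / (z + u)^2) powr a - 1))"
    by (simp add: Jtilde_sym_def Kfun_def a_def)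
  have dK: "((\<lambda>u. (u^2+2*u*z+1)/(z+u)^2) has_real_derivative (-2*(1-z^2)/(z+t)^3)) (at t)"
    apply (rule derivative_eq_intros refl)+
    using S apply simp
    using S apply (simp add: divide_simps)
    apply (simp add: algebra_simps power2_eq_square power3_eq_cube power4_eq_xxxx)
    done
  define K where "K = Kfun t z"
  have hK: "K powr a = K powr (a-1) * K"
    using powr_add[of K "a-1" 1] K unfolding K_def by simp
  have SK: "(z+t)^2 * K = t^2+2*t*z+1" using S by (simp add: K_def Kfun_def)
  have h1: "1 - z^2 = (z+t)^2 * (K - 1)"
    by (simp add: right_diff_distrib SK) (simp add: power2_eq_square algebra_simps)
  have KK: "(t^2 + 2*t*z + 1) / (z + t)^2 = K" by (simp add: K_def Kfun_def)
  have e: "2*z^2 - 2 = -2*((z+t)^2*(K-1))" using h1 by simp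
  have gen: "\<And>S Ka1. S > 0 \<Longrightarrow> (2*S)*(Ka1*K-1) + a*Ka1*(-2*(S^2*(K-1)))*S^2/S^3 = 2*S*((1-a)*(Ka1*K)+a*Ka1-1)"
    by (simp add: field_simps power2_eq_square power3_eq_cube)
  show ?thesis unfolding eqf
    apply (rule dK derivative_eq_intros refl | use S P K in \<open>simp add: KK K_def[symmetric]; fail\<close>)+
    apply (simp add: KK K_def[symmetric])
    unfolding phi_def a_def[symmetric] hK h1 K_def[symmetric]
    apply (subst e)
    using gen[OF S, of "K powr (a-1)"] by (simp add: algebra_simps)
qed

definition Yf :: "real \<Rightarrow> real \<Rightarrow> real" where
  "Yf t th = (cos th)^2 / (sin th + t)^2"
definition Ff :: "real \<Rightarrow> real \<Rightarrow> real \<Rightarrow> real" where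
  "Ff q t th = 1 / (q * sqrt (gfun (2/q) (Yf t th)))"
definition Fx :: "real \<Rightarrow> real \<Rightarrow> real \<Rightarrow> real" where
  "Fx q t th = mfun (2/q) (Yf t th) / (q * (sin th + t) * gfun (2/q) (Yf t th) * sqrt (gfun (2/q) (Yf t th)))"
definition Phi :: "real \<Rightarrow> real \<Rightarrow> real" where
  "Phi q t = integral {-(pi/2)..pi/2} (Ff q t)"

lemma sin_t_pos: "(t::real) > 1 \<Longrightarrow> sin (th::real) + t > 0"
  using sin_ge_minus_one[of th] by linarith

lemma Yf_nonneg: "Yf t th \<ge> 0" by (simp add: Yf_def)

lemma F_deriv:
  assumes "q > 0" "t > 1"
  shows "((\<lambda>t. Ff q t th) has_real_derivative Fx q t th) (at t)"
proof (cases "cos th = 0")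
  case True
  then have "(\<lambda>t. Ff q t th) = (\<lambda>t. 1 / (q * sqrt (2/q)))"
    by (simp add: Ff_def Yf_def gfun_def)
  moreover have "Fx q t th = 0" using True by (simp add: Fx_def Yf_def mfun_0)
  ultimately show ?thesis by simp
next
  case False
  define a where "a = 2/q"
  have s: "sin th + t > 0" using sin_t_pos assms by simp
  have Y: "Yf t th > 0" using False s by (simp add: Yf_def)
  define S where "S = sin th + t"
  have Spos: "S > 0" using s S_def by simp
  have dY: "((\<lambda>t. Yf t th) has_real_derivative (-2 * Yf t th / (sin th + t))) (at t)"
    unfolding Yf_def
    apply (rule derivative_eq_intros refl)+
    using s apply simp
    apply (simp only: S_def[symmetric])
    using Spos by (simp add: field_simps power2_eq_square)
  have dG: "((\<lambda>t. gfun a (Yf t th)) has_real_derivative (-2 * mfun a (Yf t th) / (sin th + t))) (at t)"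
  proof -
    have "((\<lambda>t. gfun a (Yf t th)) has_real_derivative (mfun a (Yf t th) / Yf t th) * (-2 * Yf t th / (sin th + t))) (at t)"
      by (rule DERIV_chain2[OF gfun_deriv[OF Y] dY])
    then show ?thesis using Y by (simp add: mult.commute)
  qed
  have G: "gfun a (Yf t th) > 0" using gfun_pos[of a] Y assms by (simp add: a_def)
  show ?thesis unfolding Ff_def a_def[symmetric]
    apply (rule derivative_eq_intros dG refl | use G assms in \<open>simp; fail\<close>)+
  proof -
    define r where "r = sqrt (gfun a (Yf t th))"
    have r: "r > 0" "r * r = gfun a (Yf t th)" using G by (auto simp: r_def)
    have gen: "\<And>M. (0*(q*r) - 1*(0*r + inverse r/2*(-2*M/S)*q))/(q*r*(q*r)) = M/(q*S*(r*r)*r)"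
      using r(1) Spos assms by (simp add: field_simps)
    show "(0 * (q * sqrt (gfun a (Yf t th))) -
     1 * (0 * sqrt (gfun a (Yf t th)) + inverse (sqrt (gfun a (Yf t th))) / 2 *
       (- 2 * mfun a (Yf t th) / (sin th + t)) * q)) /
     (q * sqrt (gfun a (Yf t th)) * (q * sqrt (gfun a (Yf t th)))) = Fx q t th"
      unfolding Fx_def a_def[symmetric] r_def[symmetric] S_def[symmetric] gen r(2) ..
  qed
qed

lemma Yf_cont: "continuous_on ({1<..} \<times> UNIV) (\<lambda>p. Yf (fst p) (snd p))"
  unfolding Yf_def
  by (intro continuous_intros) (auto, metis sin_t_pos less_irrefl)

lemma Fx_cont:
  assumes "q > 0"
  shows "continuous_on ({1<..} \<times> UNIV) (\<lambda>p. Fx q (fst p) (snd p))"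
proof -
  have cG: "continuous_on ({1<..} \<times> UNIV) (\<lambda>p. gfun (2/q) (Yf (fst p) (snd p)))"
    by (rule continuous_on_compose2[OF gfun_cont_on Yf_cont]) (auto simp: Yf_nonneg)
  have cM: "continuous_on ({1<..} \<times> UNIV) (\<lambda>p. mfun (2/q) (Yf (fst p) (snd p)))"
    by (rule continuous_on_compose2[OF mfun_cont_on Yf_cont]) (auto simp: Yf_nonneg)
  show ?thesis unfolding Fx_def
    apply (intro continuous_intros cG cM)
    using assms gfun_pos[of "2/q", OF _ Yf_nonneg] sin_t_pos
    apply auto
    apply (metis less_irrefl)
    apply (metis less_irrefl)
    done
qed

lemma Ff_cont:
  assumes "q > 0"
  shows "continuous_on ({1<..} \<times> UNIV) (\<lambda>p. Ff q (fst p) (snd p))"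
proof -
  have cG: "continuous_on ({1<..} \<times> UNIV) (\<lambda>p. gfun (2/q) (Yf (fst p) (snd p)))"
    by (rule continuous_on_compose2[OF gfun_cont_on Yf_cont]) (auto simp: Yf_nonneg)
  show ?thesis unfolding Ff_def
    apply (intro continuous_intros cG)
    using assms gfun_pos[of "2/q", OF _ Yf_nonneg]
    apply auto
    apply (metis less_irrefl)
    done
qed

lemma slice_cont:
  assumes "continuous_on ({1<..} \<times> UNIV) (\<lambda>p. f (fst p) (snd p))" "t > (1::real)"
  shows "continuous_on A (f t)"
proof -
  have "continuous_on A (\<lambda>th. f (fst (t, th)) (snd (t, th)))"
    by (rule continuous_on_compose2[OF assms(1)]) (use assms(2) in \<open>auto intro!: continuous_intros\<close>)
  then show ?thesis by simp
qed

lemma Phi_deriv: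
  assumes "q > 0" "t > 1"
  shows "(Phi q has_real_derivative integral {-(pi/2)..pi/2} (Fx q t)) (at t)"
proof -
  have fx: "((\<lambda>x. Ff q x th) has_field_derivative Fx q x th) (at x within {1<..})"
    if "x \<in> {1<..}" "th \<in> cbox (- (pi / 2)) (pi / 2)" for x th
  proof -
    have "x > 1" using that by simp
    from F_deriv[OF assms(1) this] show ?thesis by (rule has_field_derivative_at_within)
  qed
  have int: "Ff q x integrable_on cbox (- (pi / 2)) (pi / 2)" if "x \<in> {1<..}" for x
  proof -
    have "x > 1" using that by simp
    from slice_cont[OF Ff_cont[OF assms(1)] this] show ?thesis by (rule integrable_continuous)
  qed
  have cont: "continuous_on ({1<..} \<times> cbox (- (pi / 2)) (pi / 2)) (\<lambda>(x, th). Fx q x th)"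
  proof -
    have "continuous_on ({1<..} \<times> cbox (- (pi / 2)) (pi / 2)) (\<lambda>p. Fx q (fst p) (snd p))"
      by (rule continuous_on_subset[OF Fx_cont[OF assms(1)]]) blast
    then show ?thesis by (simp add: case_prod_unfold)
  qed
  have t: "t \<in> {1<..}" using assms by simp
  have cv: "convex ({1<..} :: real set)" by simp
  have "((\<lambda>t. integral (cbox (-(pi/2)) (pi/2)) (Ff q t)) has_field_derivative integral (cbox (-(pi/2)) (pi/2)) (Fx q t)) (at t within {1<..})"
    by (rule leibniz_rule_field_derivative[OF fx int cont t cv])
  moreover have "at t within {1<..} = at t" using t by (intro at_within_open) auto
  moreover have iv: "cbox (-(pi/2)) (pi/2) = {-(pi/2)..pi/2::real}" by (rule cbox_interval)
  moreover have "Phi q = (\<lambda>t. integral (cbox (-(pi/2)) (pi/2)) (Ff q t))"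
    unfolding iv by (rule ext) (simp only: Phi_def)
  ultimately show ?thesis by simp
qed

lemma Fx_sign:
  assumes "q > 0" "t > 1" "-(pi/2) < th" "th < pi/2"
  shows "(q < 2 \<longrightarrow> Fx q t th > 0) \<and> (q > 2 \<longrightarrow> Fx q t th < 0)"
proof -
  have c: "cos th > 0" using assms by (intro cos_gt_zero_pi) auto
  have s: "sin th + t > 0" using sin_t_pos assms by simp
  have Y: "Yf t th > 0" using c s by (simp add: Yf_def)
  have G: "gfun (2/q) (Yf t th) > 0" using gfun_pos[of "2/q"] Y assms by simp
  have den: "q * (sin th + t) * gfun (2/q) (Yf t th) * sqrt (gfun (2/q) (Yf t th)) > 0"
    using G s assms by simp
  have ph: "(2/q > 1 \<longrightarrow> phi (2/q) (1 + Yf t th) < 0) \<and> (2/q < 1 \<longrightarrow> phi (2/q) (1 + Yf t th) > 0)"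
    using phi_sign[of "2/q" "1 + Yf t th"] Y assms by simp
  have m: "mfun (2/q) (Yf t th) = - phi (2/q) (1 + Yf t th) / Yf t th" by (rule mfun_phi[OF Y])
  show ?thesis
  proof (intro conjI impI)
    assume "q < 2"
    then have "2/q > 1" using assms by simp
    then have "mfun (2/q) (Yf t th) > 0" using ph m Y by (simp add: divide_neg_pos)
    then show "Fx q t th > 0" unfolding Fx_def using den by simp
  next
    assume "q > 2"
    then have "2/q < 1" using assms by simp
    then have "mfun (2/q) (Yf t th) < 0" using ph m Y by (simp add: divide_pos_pos)
    then show "Fx q t th < 0" unfolding Fx_def using den by (simp add: divide_neg_pos)
  qed
qed

lemma Phi_deriv_sign:
  assumes "q > 0" "t > 1"
  shows "(q < 2 \<longrightarrow> integral {-(pi/2)..pi/2} (Fx q t) > 0) \<and> (q > 2 \<longrightarrow> integral {-(pi/2)..pi/2} (Fx q t) < 0)"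
proof -
  have cF: "continuous_on {-(pi/2)..pi/2} (Fx q t)" using slice_cont[OF Fx_cont[OF assms(1)] assms(2)] .
  have ne: "{-(pi/2)<..<pi/2} \<noteq> {}" using pi_gt_zero by (auto simp: not_le intro!: exI[of _ 0])
  show ?thesis
  proof (intro conjI impI)
    assume "q < 2"
    then have "integral {-(pi/2)..pi/2} (\<lambda>_. 0) < integral {-(pi/2)..pi/2} (Fx q t)"
      using Fx_sign assms by (intro integral_less_real cF ne) auto
    then show "integral {-(pi/2)..pi/2} (Fx q t) > 0" by simp
  next
    assume "q > 2"
    then have "integral {-(pi/2)..pi/2} (Fx q t) < integral {-(pi/2)..pi/2} (\<lambda>_. 0)"
      using Fx_sign assms by (intro integral_less_real cF ne) auto
    then show "integral {-(pi/2)..pi/2} (Fx q t) < 0" by simp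
  qed
qed

lemma pointwise:
  fixes q t R th :: real
  assumes q: "q > 0" and t: "t > 1" and c: "cos th > 0" and R: "R = (t+1)/(t-1)"
  defines "u \<equiv> (sin th + t)/(t-1)"
  defines "v \<equiv> u powr (1/q)"
  shows "((1 + R - R * v powr (-q)) powr (2/q) - v^2) powr (-1/2) * (v * cos th / (q * (sin th + t)))
         = Ff q t th"
proof -
  define s where "s = sin th + t"
  define Y where "Y = Yf t th"
  define a where "a = 2/q"
  define G where "G = gfun a Y"
  have s: "s > 0" using sin_t_pos t s_def by simp
  have u: "u > 0" using s t by (simp add: u_def s_def[symmetric])
  have v: "v > 0" using u by (simp add: v_def)
  have Y: "Y > 0" using c s by (simp add: Y_def Yf_def s_def[symmetric])
  have G: "G > 0" using gfun_pos[of a Y] Y q by (simp add: G_def a_def)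
  have vq: "v powr (-q) = 1/u"
    using u q by (simp add: v_def powr_powr powr_minus divide_inverse)
  have v2: "u powr a = v^2"
  proof -
    have "v^2 = v powr 2" using v by (simp add: powr_numeral)
    also have "\<dots> = u powr a" using u by (simp add: v_def powr_powr a_def)
    finally show ?thesis by simp
  qed
  have base: "1 + R - R * (1/u) = u * (1 + Y)"
  proof -
    have gen: "\<And>S T::real. S>0 \<Longrightarrow> T>1 \<Longrightarrow> 1 + (T+1)/(T-1) - (T+1)/(T-1)*(1/(S/(T-1))) = S/(T-1)*(1 + (1-(S-T)^2)/S^2)"
    proof -
      fix S T :: real assume a1: "S > 0" "T > 1"
      then have n: "T - 1 \<noteq> 0" "S \<noteq> 0" by auto
      show "1 + (T+1)/(T-1) - (T+1)/(T-1)*(1/(S/(T-1))) = S/(T-1)*(1 + (1-(S-T)^2)/S^2)"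
      proof -
      define D where "D = T - 1"
      have D: "D \<noteq> 0" "T = D + 1" using n by (auto simp: D_def)
      have "1 + (D+2)/D - (D+2)/D*(1/(S/D)) = S/D*(1 + (1-(S-D-1)^2)/S^2)"
        using D n by (simp add: field_simps power2_eq_square)
      then show ?thesis by (simp add: D(2) algebra_simps)
    qed
    qed
    have YY: "Y = (1 - (s - t)^2)/s^2" by (simp add: Y_def Yf_def s_def cos_squared_eq)
    have uu: "u = s/(t-1)" by (simp add: u_def s_def)
    show ?thesis unfolding YY uu R using gen[OF s t] .
  qed
  have gY: "(1+Y) powr a - 1 = Y * G" using Y by (simp add: G_def gfun_def)
  have W: "(1 + R - R * v powr (-q)) powr (2/q) - v^2 = (v * cos th / s)^2 * G"
  proof -
    have "(1 + R - R * v powr (-q)) powr (2/q) = u powr a * (1+Y) powr a"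
    proof -
      have b2: "1 + R - R * v powr (-q) = u * (1+Y)" by (simp only: vq base)
      show ?thesis unfolding b2 using u Y by (simp add: powr_mult a_def)
    qed
    then have "(1 + R - R * v powr (-q)) powr (2/q) - v^2 = v^2 * ((1+Y) powr a - 1)"
      by (simp add: v2 algebra_simps)
    also have "\<dots> = v^2 * (Y * G)" by (simp add: gY)
    also have "\<dots> = (v * cos th / s)^2 * G"
      by (simp add: Y_def Yf_def s_def power_divide power_mult_distrib)
    finally show ?thesis .
  qed
  have sq: "sqrt ((v * cos th / s)^2 * G) = v * cos th / s * sqrt G"
    using v c s G by (simp add: real_sqrt_mult)
  have "((1 + R - R * v powr (-q)) powr (2/q) - v^2) powr (-1/2) = 1 / (v * cos th / s * sqrt G)"
  proof -
    have pos: "(v * cos th / s)^2 * G > 0" using v c s G by simp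
    define W' where "W' = (v * cos th / s)^2 * G"
    have e1: "W' powr (-1/2) = inverse (W' powr (1/2))"
      using powr_minus[of W' "1/2"] by simp
    have e2: "W' powr (1/2) = sqrt W'" using pos by (simp add: W'_def powr_half_sqrt)
    show ?thesis unfolding W W'_def[symmetric] e1 e2
      unfolding W'_def sq by (simp add: divide_inverse)
  qed
  then have "((1 + R - R * v powr (-q)) powr (2/q) - v^2) powr (-1/2) * (v * cos th / (q * s)) = 1/(q * sqrt G)"
    using v c s G q by (simp add: field_simps)
  moreover have "Ff q t th = 1/(q * sqrt G)" by (simp add: Ff_def G_def Y_def a_def)
  ultimately show ?thesis unfolding s_def[symmetric] by simp
qed

lemma Theta_eq:
  fixes q r :: real
  assumes q: "q > 0" and r: "r > 1"
  shows "Theta (-q) q r = Phi q ((r powr q + 1)/(r powr q - 1))"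
proof -
  define R where "R = r powr q"
  define t where "t = (R + 1)/(R - 1)"
  have R1: "R > 1" using q r by (simp add: R_def)
  have t1: "t > 1" using R1 by (simp add: t_def field_simps)
  have Rt: "R = (t+1)/(t-1)" using R1 by (simp add: t_def field_simps)
  define f where "f = (\<lambda>x::real. (((r powr (-q) - r powr q) / (r powr (-q) - 1) + (r powr q - 1) / (r powr (-q) - 1) * x powr (-q))
        powr (2/q) - x^2) powr (-1/2))"
  have Th: "Theta (-q) q r = integral {1..r} f" by (simp add: Theta_def f_def)
  have c1: "(r powr (-q) - r powr q) / (r powr (-q) - 1) = 1 + R"
    using R1 by (simp add: R_def[symmetric] powr_minus field_simps)
  have c2: "(r powr q - 1) / (r powr (-q) - 1) = - R"
    using R1 by (simp add: R_def[symmetric] powr_minus field_simps)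
  have f_eq: "f = (\<lambda>x. ((1 + R - R * x powr (-q)) powr (2/q) - x^2) powr (-1/2))"
    unfolding f_def c1 c2 by (simp add: algebra_simps)
  have fnn: "\<And>x. f x \<ge> 0" by (simp add: f_def)
  have fmeas[measurable]: "f \<in> borel_measurable borel" unfolding f_def by measurable
  define X where "X = (\<lambda>th. ((sin th + t)/(t-1)) powr (1/q))"
  define X' where "X' = (\<lambda>th. X th * cos th / (q * (sin th + t)))"
  have Xd: "(X has_real_derivative X' th) (at th)" for th
  proof -
    have s: "sin th + t > 0" using sin_t_pos t1 by simp
    define S where "S = sin th + t"
    define D where "D = t - 1"
    have SD: "S > 0" "D > 0" using s t1 by (auto simp: S_def D_def)
    have pd: "(S/D) powr (1/q - 1) = (S/D) powr (1/q) / (S/D)" using powr_diff[of "S/D" "1/q" 1] SD by simp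
    show ?thesis unfolding X_def X'_def
      apply (rule derivative_eq_intros refl | use s t1 in \<open>simp; fail\<close>)+
      apply (simp only: S_def[symmetric] D_def[symmetric] pd)
      using SD q by (simp add: field_simps)
  qed
  have X'c: "continuous_on {-(pi/2)..pi/2} X'"
    unfolding X'_def X_def
    by (intro continuous_intros) (use t1 sin_t_pos[OF t1] in \<open>auto simp: less_imp_neq[symmetric] q\<close>)
  have X'nn: "X' th \<ge> 0" if "th \<in> {-(pi/2)..pi/2}" for th
    using that cos_ge_zero[of th] sin_t_pos[OF t1, of th] q by (simp add: X'_def X_def)
  have Xa: "X (-(pi/2)) = 1" using t1 by (simp add: X_def)
  have Xb: "X (pi/2) = r"
  proof -
    have "(r powr q) powr (1/q) = r" using q r by (simp add: powr_powr)
    then show ?thesis using Rt unfolding R_def by (simp add: X_def add.commute)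
  qed
  have sub: "(\<integral>\<^sup>+x. f x * indicator {X (-(pi/2))..X (pi/2)} x \<partial>lborel) =
             (\<integral>\<^sup>+x. f (X x) * X' x * indicator {-(pi/2)..pi/2} x \<partial>lborel)"
    by (rule nn_integral_substitution[where g'=X']) (auto intro: Xd X'c X'nn simp: set_borel_measurable_def)
  have pw: "f (X x) * X' x = Ff q t x" if "-(pi/2) < x" "x < pi/2" for x
  proof -
    have c: "cos x > 0" using that by (intro cos_gt_zero_pi) auto
    show ?thesis unfolding f_eq X'_def X_def
      using pointwise[OF q t1 c Rt] by simp
  qed
  have AEeq: "AE x in lborel. ennreal (f (X x) * X' x * indicator {-(pi/2)..pi/2} x) = ennreal (indicator {-(pi/2)..pi/2} x * Ff q t x)"
    using AE_lborel_singleton[of "pi/2"] AE_lborel_singleton[of "-(pi/2)"]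
  proof eventually_elim
    case (elim x)
    show ?case
    proof (cases "x \<in> {-(pi/2)..pi/2}")
      case True
      then have "-(pi/2) < x" "x < pi/2" using elim by auto
      then show ?thesis using pw by (simp add: True)
    next
      case False
      then show ?thesis by simp
    qed
  qed
  have Fc: "continuous_on {-(pi/2)..pi/2} (Ff q t)" using slice_cont[OF Ff_cont[OF q] t1] .
  have FI: "(Ff q t has_integral Phi q t) {-(pi/2)..pi/2}"
    unfolding Phi_def using Fc by (intro integrable_integral integrable_continuous_interval)
  have Fnn: "Ff q t x \<ge> 0" for x
  proof -
    have "gfun (2/q) (Yf t x) > 0" using gfun_pos Yf_nonneg q by simp
    then show ?thesis using q by (simp add: Ff_def)
  qed
  have Phinn: "Phi q t \<ge> 0" by (rule has_integral_nonneg[OF FI]) (use Fnn in auto)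
  have nnF: "(\<integral>\<^sup>+x. ennreal (indicator {-(pi/2)..pi/2} x * Ff q t x) \<partial>lborel) = ennreal (Phi q t)"
    using nn_integral_has_integral_lebesgue[OF _ FI] Fnn by simp
  have nnf: "(\<integral>\<^sup>+x. ennreal (f x * indicator {1..r} x) \<partial>lborel) = ennreal (Phi q t)"
    using sub unfolding Xa Xb nnF[symmetric] by (simp add: nn_integral_cong_AE[OF AEeq])
  have "((\<lambda>x. f x * indicator {1..r} x) has_integral Phi q t) UNIV"
    by (rule nn_integral_has_integral) (use nnf Phinn fnn in auto)
  then have "(f has_integral Phi q t) {1..r}"
  proof -
    have "(\<lambda>x. f x * indicator {1..r} x) = (\<lambda>x. if x \<in> {1..r} then f x else 0)"
      by (rule ext) (simp add: indicator_def)
    with \<open>((\<lambda>x. f x * indicator {1..r} x) has_integral Phi q t) UNIV\<close> show ?thesis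
      using has_integral_restrict_UNIV[of "{1..r}" f] by simp
  qed
  then show ?thesis unfolding Th t_def R_def by (rule integral_unique)
qed

theorem theorem6p1:
  fixes q :: real
  assumes "q > 0"
  shows "(\<forall>t z. t > 1 \<longrightarrow> -1 < z \<longrightarrow> z < 1 \<longrightarrow>
            (\<exists>D. ((\<lambda>s. Jtilde_sym q s z) has_real_derivative D) (at t) \<and>
                 (q < 2 \<longrightarrow> D < 0) \<and> (q > 2 \<longrightarrow> D > 0)))
       \<and> (\<forall>r. r > 1 \<longrightarrow>
            (\<exists>D. ((\<lambda>s. Theta (-q) q s) has_real_derivative D) (at r) \<and>
                 (q < 2 \<longrightarrow> D < 0) \<and> (q > 2 \<longrightarrow> D > 0)))"
proof (intro conjI allI impI)
  fix t z :: real
  assume t: "t > 1" and z: "-1 < z" "z < 1"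
  have S: "z + t > 0" using t z by simp
  have zz: "1 - z^2 > 0" using z by (simp add: abs_square_less_1)
  have K1: "Kfun t z > 1"
  proof -
    have "t^2 + 2*t*z + 1 = (z+t)^2 + (1 - z^2)" by (simp add: power2_eq_square algebra_simps)
    then have "Kfun t z = 1 + (1 - z^2)/(z+t)^2" using S by (simp add: Kfun_def field_simps)
    then show ?thesis using zz S by simp
  qed
  have ph: "(2/q > 1 \<longrightarrow> phi (2/q) (Kfun t z) < 0) \<and> (2/q < 1 \<longrightarrow> phi (2/q) (Kfun t z) > 0)"
    using phi_sign[OF _ K1, of "2/q"] assms by simp
  show "\<exists>D. ((\<lambda>s. Jtilde_sym q s z) has_real_derivative D) (at t) \<and> (q < 2 \<longrightarrow> D < 0) \<and> (q > 2 \<longrightarrow> D > 0)"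
  proof (intro exI conjI impI)
    show "((\<lambda>s. Jtilde_sym q s z) has_real_derivative 2*(z+t)*phi (2/q) (Kfun t z)) (at t)"
      by (rule J_deriv[OF t z assms])
  next
    assume "q < 2"
    then have "2/q > 1" using assms by simp
    then show "2*(z+t)*phi (2/q) (Kfun t z) < 0" using ph S by (simp add: mult_pos_neg)
  next
    assume "q > 2"
    then have "2/q < 1" using assms by simp
    then show "2*(z+t)*phi (2/q) (Kfun t z) > 0" using ph S by simp
  qed
next
  fix r :: real
  assume r: "r > 1"
  define T where "T = (\<lambda>r. (r powr q + 1)/(r powr q - 1))"
  have R1: "r powr q > 1" using r assms by simp
  have T1: "T r > 1" using R1 by (simp add: T_def field_simps)
  define dT where "dT = -2*q*r powr (q-1)/(r powr q - 1)^2"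
  have dTneg: "dT < 0" using R1 r assms by (simp add: dT_def)
  have dTd: "(T has_real_derivative dT) (at r)"
  proof -
    define R where "R = r powr q"
    define P where "P = r powr (q-1)"
    have R: "R > 1" using R1 by (simp add: R_def)
    show ?thesis unfolding T_def
      apply (rule derivative_eq_intros refl | use r R1 in \<open>simp; fail\<close> | use R1 in linarith)+
    proof -
      have gen: "\<And>R P::real. R > 1 \<Longrightarrow> ((q*P*1+0)*(R-1) - (R+1)*(q*P*1-0))/((R-1)*(R-1)) = -2*q*P/(R-1)^2"
        by (simp add: field_simps power2_eq_square)
      show "((q * r powr (q - 1) * 1 + 0) * (r powr q - 1) - (r powr q + 1) * (q * r powr (q - 1) * 1 - 0)) /
        ((r powr q - 1) * (r powr q - 1)) = dT"
        unfolding dT_def by (rule gen[OF R1])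
    qed
  qed
  define dP where "dP = integral {-(pi/2)..pi/2} (Fx q (T r))"
  have chain: "((\<lambda>s. Phi q (T s)) has_real_derivative dP * dT) (at r)"
    unfolding dP_def by (rule DERIV_chain2[OF Phi_deriv[OF assms T1] dTd])
  have eq: "\<And>s. s \<in> {1<..} \<Longrightarrow> Phi q (T s) = Theta (-q) q s"
    using Theta_eq[OF assms] by (simp add: T_def)
  have sg: "(q < 2 \<longrightarrow> dP > 0) \<and> (q > 2 \<longrightarrow> dP < 0)"
    unfolding dP_def by (rule Phi_deriv_sign[OF assms T1])
  show "\<exists>D. ((\<lambda>s. Theta (-q) q s) has_real_derivative D) (at r) \<and> (q < 2 \<longrightarrow> D < 0) \<and> (q > 2 \<longrightarrow> D > 0)"
  proof (intro exI conjI impI)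
    show "((\<lambda>s. Theta (-q) q s) has_real_derivative dP * dT) (at r)"
      by (rule has_field_derivative_transform_within_open[OF chain, of "{1<..}"]) (use r eq in auto)
  next
    assume "q < 2" then show "dP * dT < 0" using sg dTneg by (simp add: mult_pos_neg)
  next
    assume "q > 2" then show "dP * dT > 0" using sg dTneg by (simp add: mult_neg_neg)
  qed
qed

end
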